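(* Let $H$ be a Hilbert space and let $A=A^*$ be a linear selfadjoint operator in $H$, either bounded or densely defined and unbounded. Let $f\in H$ be such that the equation $Au=f$ is solvable (not necessarily uniquely), and let $y$ be its minimal-norm solution, i.e. the solution with $y\perp N:=\{u: Au=0\}$. For $\delta>0$ let $f_\delta\in H$ satisfy $\|f-f_\delta\|\le\delta$. Let $a=a(\delta)>0$ satisfy $\lim_{\delta\to 0}a(\delta)=0$ and $\lim_{\delta\to0}\frac{\delta}{a(\delta)}=0$. Then the equation $(A+ia(\delta))u=f_\delta$ has a unique solution $u_\delta$, and $$\lim_{\delta\to 0}\|u_\delta-y\|=0.$$
   Context: The problem $Au=f$ is assumed to be ill-posed; the data $f_\delta$ (noisy data) are given while $f$ is not known. *)

theory Defs
  imports "HOL-Analysis.Analysis"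
begin

text \<open>A complex Hilbert space is given explicitly on a carrier type 'a (an additive
abelian group) by a complex scalar multiplication sc and an inner product ip
(linear in the first argument, conjugate symmetric, positive definite),
complete with respect to the induced norm.\<close>

definition complex_inner_space ::
  "(complex \<Rightarrow> 'a::ab_group_add \<Rightarrow> 'a) \<Rightarrow> ('a \<Rightarrow> 'a \<Rightarrow> complex) \<Rightarrow> bool" where
  "complex_inner_space sc ip \<longleftrightarrow>
     (\<forall>c x y. sc c (x + y) = sc c x + sc c y) \<and>
     (\<forall>a b x. sc (a + b) x = sc a x + sc b x) \<and>
     (\<forall>a b x. sc a (sc b x) = sc (a * b) x) \<and>
     (\<forall>x. sc 1 x = x) \<and>
     (\<forall>x y z. ip (x + y) z = ip x z + ip y z) \<and>
     (\<forall>c x y. ip (sc c x) y = c * ip x y) \<and>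
     (\<forall>x y. ip y x = cnj (ip x y)) \<and>
     (\<forall>x. 0 \<le> Re (ip x x)) \<and>
     (\<forall>x. ip x x = 0 \<longrightarrow> x = 0)"

definition cnorm :: "('a \<Rightarrow> 'a \<Rightarrow> complex) \<Rightarrow> 'a \<Rightarrow> real" where
  "cnorm ip x = sqrt (Re (ip x x))"

definition complex_hilbert_space ::
  "(complex \<Rightarrow> 'a::ab_group_add \<Rightarrow> 'a) \<Rightarrow> ('a \<Rightarrow> 'a \<Rightarrow> complex) \<Rightarrow> bool" where
  "complex_hilbert_space sc ip \<longleftrightarrow> complex_inner_space sc ip \<and>
     (\<forall>X :: nat \<Rightarrow> 'a.
        (\<forall>e>0. \<exists>N. \<forall>m\<ge>N. \<forall>n\<ge>N. cnorm ip (X m - X n) < e) \<longrightarrow>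
        (\<exists>l. (\<lambda>n. cnorm ip (X n - l)) \<longlonglongrightarrow> 0))"

definition densely_defined_linear_op ::
  "(complex \<Rightarrow> 'a::ab_group_add \<Rightarrow> 'a) \<Rightarrow> ('a \<Rightarrow> 'a \<Rightarrow> complex) \<Rightarrow> 'a set \<Rightarrow> ('a \<Rightarrow> 'a) \<Rightarrow> bool" where
  "densely_defined_linear_op sc ip D A \<longleftrightarrow>
     0 \<in> D \<and> (\<forall>u\<in>D. \<forall>v\<in>D. u + v \<in> D) \<and> (\<forall>c. \<forall>u\<in>D. sc c u \<in> D) \<and>
     (\<forall>x. \<forall>e>0. \<exists>d\<in>D. cnorm ip (x - d) < e) \<and>
     (\<forall>u\<in>D. \<forall>v\<in>D. A (u + v) = A u + A v) \<and>
     (\<forall>c. \<forall>u\<in>D. A (sc c u) = sc c (A u))"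

definition adjoint_domain ::
  "('a \<Rightarrow> 'a \<Rightarrow> complex) \<Rightarrow> 'a set \<Rightarrow> ('a \<Rightarrow> 'a) \<Rightarrow> 'a set" where
  "adjoint_domain ip D A = {v. \<exists>w. \<forall>u\<in>D. ip (A u) v = ip u w}"

text \<open>A = A*: same domain, and A* v = A v for v in the domain
(the adjoint value is unique by density).\<close>

definition selfadjoint_op ::
  "(complex \<Rightarrow> 'a::ab_group_add \<Rightarrow> 'a) \<Rightarrow> ('a \<Rightarrow> 'a \<Rightarrow> complex) \<Rightarrow> 'a set \<Rightarrow> ('a \<Rightarrow> 'a) \<Rightarrow> bool" where
  "selfadjoint_op sc ip D A \<longleftrightarrow>
     densely_defined_linear_op sc ip D A \<and>
     adjoint_domain ip D A = D \<and>
     (\<forall>u\<in>D. \<forall>v\<in>D. ip (A u) v = ip u (A v))"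

end

theory Submission
  imports Defs
begin

locale chs =
  fixes sc :: "complex \<Rightarrow> 'a::ab_group_add \<Rightarrow> 'a" and ip :: "'a \<Rightarrow> 'a \<Rightarrow> complex"
  assumes H: "complex_hilbert_space sc ip"
begin

lemma ax: "complex_inner_space sc ip" using H unfolding complex_hilbert_space_def by (rule conjunct1)
lemmas ax' = ax[unfolded complex_inner_space_def]
lemma sc_add: "sc c (x + y) = sc c x + sc c y"
  by (rule ax'[THEN conjunct1, rule_format])
lemma sc_add2: "sc (p + q) x = sc p x + sc q x"
  by (rule ax'[THEN conjunct2, THEN conjunct1, rule_format])
lemma sc_sc: "sc p (sc q x) = sc (p * q) x"
  by (rule ax'[THEN conjunct2, THEN conjunct2, THEN conjunct1, rule_format])
lemma sc_one: "sc 1 x = x"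
  by (rule ax'[THEN conjunct2, THEN conjunct2, THEN conjunct2, THEN conjunct1, rule_format])
lemma ip_add: "ip (x + y) z = ip x z + ip y z"
  by (rule ax'[THEN conjunct2, THEN conjunct2, THEN conjunct2, THEN conjunct2, THEN conjunct1, rule_format])
lemma ip_sc: "ip (sc c x) y = c * ip x y"
  by (rule ax'[THEN conjunct2, THEN conjunct2, THEN conjunct2, THEN conjunct2, THEN conjunct2, THEN conjunct1, rule_format])
lemma ip_cnj: "ip y x = cnj (ip x y)"
  by (rule ax'[THEN conjunct2, THEN conjunct2, THEN conjunct2, THEN conjunct2, THEN conjunct2, THEN conjunct2, THEN conjunct1, rule_format])
lemma ip_pos: "0 \<le> Re (ip x x)"
  by (rule ax'[THEN conjunct2, THEN conjunct2, THEN conjunct2, THEN conjunct2, THEN conjunct2, THEN conjunct2, THEN conjunct2, THEN conjunct1, rule_format])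
lemma ip_zero: "ip x x = 0 \<Longrightarrow> x = 0"
  by (rule ax'[THEN conjunct2, THEN conjunct2, THEN conjunct2, THEN conjunct2, THEN conjunct2, THEN conjunct2, THEN conjunct2, THEN conjunct2, rule_format])

lemma complete: assumes "\<forall>e>0. \<exists>N. \<forall>m\<ge>N. \<forall>n\<ge>N. cnorm ip (X m - X n) < e"
  shows "\<exists>l. (\<lambda>n. cnorm ip (X n - l)) \<longlonglongrightarrow> 0"
  using assms by (rule H[unfolded complex_hilbert_space_def, THEN conjunct2, THEN spec, THEN mp])

lemma sc_zero[simp]: "sc c 0 = 0"
  using sc_add[of c 0 0] by simp
lemma sc_zero2[simp]: "sc 0 x = 0"
  using sc_add2[of 0 0 x] by simp
lemma sc_minus: "sc c (- x) = - sc c x"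
proof -
  have "sc c x + sc c (-x) = 0" using sc_add[of c x "-x"] by simp
  then show ?thesis by (metis minus_unique)
qed
lemma sc_diff: "sc c (x - y) = sc c x - sc c y"
  by (simp only: diff_conv_add_uminus sc_add sc_minus)
lemma sc_neg: "sc (- c) x = - sc c x"
proof -
  have "sc c x + sc (-c) x = 0" using sc_add2[of c "-c" x] by simp
  then show ?thesis by (metis minus_unique)
qed
lemma sc_diff2: "sc (p - q) x = sc p x - sc q x"
  by (simp only: diff_conv_add_uminus sc_add2 sc_neg)

lemma ip_zero_l[simp]: "ip 0 y = 0"
  using ip_add[of 0 0 y] by simp
lemma ip_minus_l: "ip (- x) y = - ip x y"
proof -
  have "ip x y + ip (-x) y = 0" using ip_add[of x "-x" y] by simp
  then show ?thesis by (metis minus_unique)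
qed
lemma ip_diff_l: "ip (x - y) z = ip x z - ip y z"
  by (simp only: diff_conv_add_uminus ip_add ip_minus_l)
lemma ip_add_r: "ip x (y + z) = ip x y + ip x z"
proof -
  have "ip x (y + z) = cnj (ip (y+z) x)" by (rule ip_cnj)
  also have "\<dots> = cnj (ip y x) + cnj (ip z x)" by (simp add: ip_add)
  also have "\<dots> = ip x y + ip x z" by (simp add: ip_cnj[of y x] ip_cnj[of z x])
  finally show ?thesis .
qed
lemma ip_sc_r: "ip x (sc c y) = cnj c * ip x y"
proof -
  have "ip x (sc c y) = cnj (ip (sc c y) x)" by (rule ip_cnj)
  also have "\<dots> = cnj c * cnj (ip y x)" by (simp add: ip_sc)
  also have "\<dots> = cnj c * ip x y" by (simp add: ip_cnj[of y x])
  finally show ?thesis .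
qed
lemma ip_zero_r[simp]: "ip x 0 = 0"
  using ip_add_r[of x 0 0] by simp
lemma ip_minus_r: "ip x (- y) = - ip x y"
proof -
  have "ip x y + ip x (-y) = 0" using ip_add_r[of x y "-y"] by simp
  then show ?thesis by (metis minus_unique)
qed
lemma ip_diff_r: "ip x (y - z) = ip x y - ip x z"
  by (simp only: diff_conv_add_uminus ip_add_r ip_minus_r)

definition nsq where "nsq x = Re (ip x x)"

lemma ip_self: "ip x x = complex_of_real (nsq x)"
proof -
  have "Im (ip x x) = 0" using arg_cong[OF ip_cnj[of x x], of Im] by simp
  then show ?thesis unfolding nsq_def by (simp add: complex_eq_iff)
qed

lemma nsq_nonneg: "0 \<le> nsq x" unfolding nsq_def using ip_pos .
lemma nsq_zero: "nsq x = 0 \<longleftrightarrow> x = 0"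
proof
  assume "nsq x = 0" then show "x = 0" using ip_self[of x] ip_zero[of x] by simp
next
  assume "x = 0" then show "nsq x = 0" by (simp add: nsq_def)
qed

lemma cnorm_nsq: "cnorm ip x = sqrt (nsq x)" unfolding cnorm_def nsq_def ..
lemma cnorm_sq: "(cnorm ip x)^2 = nsq x" using nsq_nonneg[of x] by (simp add: cnorm_nsq)
lemma cnorm_nonneg: "0 \<le> cnorm ip x" using nsq_nonneg[of x] by (simp add: cnorm_nsq)
lemma cnorm_zero: "cnorm ip x = 0 \<longleftrightarrow> x = 0" by (simp add: cnorm_nsq nsq_zero)
lemma cnorm_0[simp]: "cnorm ip 0 = 0" by (simp add: cnorm_zero)

lemma ip_expand: "ip (x + sc t y) (x + sc t y) = ip x x + cnj t * ip x y + t * cnj (ip x y) + t * cnj t * ip y y"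
  by (simp add: ip_add ip_add_r ip_sc ip_sc_r ip_cnj[of x y] algebra_simps)

lemma nsq_expand: "nsq (x + sc t y) = nsq x + 2 * Re (cnj t * ip x y) + (cmod t)^2 * nsq y"
proof -
  have e: "t * cnj t * ip y y = complex_of_real ((cmod t)^2 * nsq y)"
    by (simp only: ip_self of_real_mult complex_norm_square)
  have "Re (ip (x + sc t y) (x + sc t y)) = Re (ip x x) + 2 * Re (cnj t * ip x y) + Re (t * cnj t * ip y y)"
    unfolding ip_expand by simp
  also have "Re (t * cnj t * ip y y) = (cmod t)^2 * nsq y" unfolding e by simp
  finally show ?thesis unfolding nsq_def by simp
qed

lemma nsq_sc: "nsq (sc t y) = (cmod t)^2 * nsq y"
  using nsq_expand[of 0 t y] by (simp add: nsq_def)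

lemma cnorm_sc: "cnorm ip (sc t y) = cmod t * cnorm ip y"
  by (simp add: cnorm_nsq nsq_sc real_sqrt_mult)

lemma cnorm_minus: "cnorm ip (- x) = cnorm ip x"
  using cnorm_sc[of "-1" x] by (simp add: sc_neg sc_one)

lemma cnorm_commute: "cnorm ip (x - y) = cnorm ip (y - x)"
  by (metis cnorm_minus minus_diff_eq)

lemma CS: "cmod (ip x y) \<le> cnorm ip x * cnorm ip y"
proof (cases "y = 0")
  case True then show ?thesis by (simp add: cnorm_nonneg)
next
  case False
  define Y where "Y = nsq y"
  define c where "c = ip x y"
  have Y: "Y > 0" using False nsq_zero nsq_nonneg Y_def by (metis order_le_less)
  define t where "t = - c / complex_of_real Y"
  have "0 \<le> nsq (x + sc t y)" by (rule nsq_nonneg)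
  also have "\<dots> = nsq x + 2 * Re (cnj t * c) + (cmod t)^2 * Y"
    using nsq_expand c_def Y_def by simp
  also have "cnj t * c = - complex_of_real ((cmod c)^2 / Y)"
  proof -
    have cc: "c * cnj c = complex_of_real ((cmod c)^2)" by (simp only: complex_norm_square)
    have "cnj t * c = - (c * cnj c) / complex_of_real Y" unfolding t_def by (simp add: mult.commute)
    also have "\<dots> = - complex_of_real ((cmod c)^2 / Y)" unfolding cc by simp
    finally show ?thesis .
  qed
  also have "(cmod t)^2 * Y = (cmod c)^2 / Y"
    unfolding t_def using Y by (simp add: norm_divide power_divide power2_eq_square)
  finally have "(cmod c)^2 / Y \<le> nsq x" by simp
  then have "(cmod c)^2 \<le> nsq x * Y" using Y by (simp add: field_simps)
  then have "sqrt ((cmod c)^2) \<le> sqrt (nsq x * Y)" by (rule real_sqrt_le_mono)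
  then show ?thesis unfolding c_def Y_def cnorm_nsq by (simp add: real_sqrt_mult)
qed

lemma triangle: "cnorm ip (x + y) \<le> cnorm ip x + cnorm ip y"
proof -
  have "nsq (x + y) = nsq x + 2 * Re (ip x y) + nsq y"
    using nsq_expand[of x 1 y] by (simp add: sc_one)
  also have "\<dots> \<le> nsq x + 2 * (cnorm ip x * cnorm ip y) + nsq y"
    using CS[of x y] complex_Re_le_cmod[of "ip x y"] by linarith
  also have "\<dots> = (cnorm ip x + cnorm ip y)^2"
    by (simp add: power2_sum cnorm_sq)
  finally have "sqrt (nsq (x + y)) \<le> sqrt ((cnorm ip x + cnorm ip y)^2)"
    by (rule real_sqrt_le_mono)
  then show ?thesis by (simp add: cnorm_nsq[of "x+y"] cnorm_nonneg)
qed

lemma triangle_diff: "cnorm ip (x - z) \<le> cnorm ip (x - y) + cnorm ip (y - z)"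
  using triangle[of "x - y" "y - z"] by simp

end

context chs begin

lemma lim_ip_r:
  assumes "(\<lambda>n. cnorm ip (X n - l)) \<longlonglongrightarrow> 0"
  shows "(\<lambda>n. ip w (X n)) \<longlonglongrightarrow> ip w l"
proof -
  have "(\<lambda>n. ip w (X n) - ip w l) \<longlonglongrightarrow> 0"
  proof (rule Lim_null_comparison)
    show "\<forall>\<^sub>F n in sequentially. norm (ip w (X n) - ip w l) \<le> cnorm ip w * cnorm ip (X n - l)"
      using CS[of w] by (simp add: ip_diff_r[symmetric])
    show "(\<lambda>n. cnorm ip w * cnorm ip (X n - l)) \<longlonglongrightarrow> 0"
      using tendsto_mult_right_zero[OF assms] by simp
  qed
  then show ?thesis by (simp add: LIM_zero_iff)
qed

lemma parallelogram: "nsq (u + v) + nsq (u - v) = 2 * nsq u + 2 * nsq v"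
proof -
  have "nsq (u - v) = nsq (u + sc (-1) v)" by (simp add: sc_neg sc_one)
  then show ?thesis using nsq_expand[of u 1 v] nsq_expand[of u "-1" v] by (simp add: sc_one)
qed

lemma cnorm_lt_of_nsq: "e > 0 \<Longrightarrow> nsq x < e^2 \<Longrightarrow> cnorm ip x < e"
  unfolding cnorm_nsq using real_sqrt_less_mono[of "nsq x" "e^2"] by simp

lemma projection:
  assumes M0: "0 \<in> M" and Madd: "\<forall>u\<in>M. \<forall>v\<in>M. u + v \<in> M"
    and Msc: "\<forall>c. \<forall>u\<in>M. sc c u \<in> M"
    and Mcl: "\<And>z. (\<forall>e>0. \<exists>m\<in>M. cnorm ip (z - m) < e) \<Longrightarrow> z \<in> M"
  shows "\<exists>p\<in>M. \<forall>m\<in>M. ip (x - p) m = 0"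
proof -
  define S where "S = (\<lambda>m. nsq (x - m)) ` M"
  define d2 where "d2 = Inf S"
  have Sne: "S \<noteq> {}" using M0 S_def by blast
  have Sbdd: "bdd_below S" unfolding S_def by (rule bdd_belowI[of _ 0]) (auto simp: nsq_nonneg)
  have d2le: "d2 \<le> nsq (x - m)" if "m \<in> M" for m
    unfolding d2_def using that Sbdd S_def by (auto intro: cInf_lower)
  have d2nn: "0 \<le> d2" unfolding d2_def by (rule cInf_greatest[OF Sne]) (auto simp: S_def nsq_nonneg)
  have ex: "\<forall>n. \<exists>m. m \<in> M \<and> nsq (x - m) < d2 + inverse (real (Suc n))"
  proof
    fix n :: nat
    have "Inf S < d2 + inverse (real (Suc n))" unfolding d2_def by simp
    from cInf_lessD[OF Sne this] show "\<exists>m. m \<in> M \<and> nsq (x - m) < d2 + inverse (real (Suc n))"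
      unfolding S_def by blast
  qed
  from choice[OF ex] obtain mm where mm: "\<forall>n. mm n \<in> M \<and> nsq (x - mm n) < d2 + inverse (real (Suc n))"
    by blast
  have mmM: "\<And>n. mm n \<in> M" and mmd: "\<And>n. nsq (x - mm n) < d2 + inverse (real (Suc n))"
    using mm by auto
  have half: "mm n + mm k = sc 2 (sc (1/2) (mm n + mm k))" for n k
    by (simp add: sc_sc sc_one)
  have two: "sc 2 z = z + z" for z
    using sc_add2[of 1 1 z] by (simp add: sc_one)
  have bound: "nsq (mm k - mm n) \<le> 2 * inverse (real (Suc n)) + 2 * inverse (real (Suc k))" for n k
  proof -
    define h where "h = sc (1/2) (mm n + mm k)"
    have hM: "h \<in> M" unfolding h_def using Madd Msc mmM by blast
    have e1: "(x - mm n) + (x - mm k) = sc 2 (x - h)"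
    proof -
      have "sc 2 (x - h) = sc 2 x - sc 2 h" by (rule sc_diff)
      also have "sc 2 h = mm n + mm k" unfolding h_def using half[of n k] by simp
      finally show ?thesis using two[of x] by (simp add: algebra_simps)
    qed
    have e2: "(x - mm n) - (x - mm k) = mm k - mm n" by (simp add: algebra_simps)
    have "nsq (sc 2 (x - h)) = 4 * nsq (x - h)" by (simp add: nsq_sc)
    then have "nsq ((x - mm n) + (x - mm k)) \<ge> 4 * d2" using e1 d2le[OF hM] by simp
    moreover have "nsq ((x - mm n) + (x - mm k)) + nsq (mm k - mm n) = 2 * nsq (x - mm n) + 2 * nsq (x - mm k)"
      using parallelogram[of "x - mm n" "x - mm k"] e2 by simp
    ultimately show ?thesis using mmd[of n] mmd[of k] by linarith
  qed
  have cauchy: "\<forall>e>0. \<exists>N. \<forall>m\<ge>N. \<forall>n\<ge>N. cnorm ip (mm m - mm n) < e"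
  proof (intro allI impI)
    fix e :: real assume e: "e > 0"
    obtain N :: nat where N: "4 / e^2 < real N" using reals_Archimedean2 by blast
    have "inverse (real (Suc N)) < e^2 / 4"
    proof -
      have "4 / e^2 < real (Suc N)" using N by simp
      then show ?thesis using e by (simp add: field_simps)
    qed
    show "\<exists>N. \<forall>m\<ge>N. \<forall>n\<ge>N. cnorm ip (mm m - mm n) < e"
    proof (intro exI allI impI)
      fix m n assume mN: "m \<ge> N" and nN: "n \<ge> N"
      have "inverse (real (Suc m)) \<le> inverse (real (Suc N))" using mN by (simp add: le_imp_inverse_le)
      moreover have "inverse (real (Suc n)) \<le> inverse (real (Suc N))" using nN by (simp add: le_imp_inverse_le)
      ultimately have "nsq (mm m - mm n) < e^2"
        using bound[of m n] \<open>inverse (real (Suc N)) < e^2 / 4\<close> by linarith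
      then show "cnorm ip (mm m - mm n) < e" using e cnorm_lt_of_nsq by blast
    qed
  qed
  obtain p where p: "(\<lambda>n. cnorm ip (mm n - p)) \<longlonglongrightarrow> 0" using complete[OF cauchy] by blast
  have pM: "p \<in> M"
  proof (rule Mcl, intro allI impI)
    fix e :: real assume "e > 0"
    then have "\<forall>\<^sub>F n in sequentially. dist (cnorm ip (mm n - p)) 0 < e" using p tendstoD by blast
    then obtain n where "cnorm ip (mm n - p) < e" by (auto simp: eventually_sequentially cnorm_nonneg)
    then have "cnorm ip (p - mm n) < e" using cnorm_commute[of p "mm n"] by simp
    then show "\<exists>m\<in>M. cnorm ip (p - m) < e" using mmM by blast
  qed
  have cxp: "cnorm ip (x - p) \<le> sqrt d2 + 0"
  proof (rule LIMSEQ_le_const)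
    show "(\<lambda>n. sqrt (d2 + inverse (real (Suc n))) + cnorm ip (mm n - p)) \<longlonglongrightarrow> sqrt d2 + 0"
    proof (intro tendsto_intros p)
      show "(\<lambda>n. d2 + inverse (real (Suc n))) \<longlonglongrightarrow> d2"
        using tendsto_add[OF tendsto_const[of d2] LIMSEQ_inverse_real_of_nat] by simp
    qed
    show "\<exists>N. \<forall>n\<ge>N. cnorm ip (x - p) \<le> sqrt (d2 + inverse (real (Suc n))) + cnorm ip (mm n - p)"
    proof (intro exI allI impI)
      fix n :: nat
      have "cnorm ip (x - mm n) \<le> sqrt (d2 + inverse (real (Suc n)))"
        using mmd[of n] by (simp add: cnorm_nsq)
      then show "cnorm ip (x - p) \<le> sqrt (d2 + inverse (real (Suc n))) + cnorm ip (mm n - p)"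
        using triangle_diff[of x p "mm n"] by linarith
    qed
  qed
  have xp: "nsq (x - p) \<le> d2"
    using power_mono[OF cxp[simplified] cnorm_nonneg, of 2] cnorm_sq[of "x - p"] d2nn by simp
  have "ip (x - p) m = 0" if mM: "m \<in> M" for m
  proof -
    define c where "c = ip (x - p) m"
    define r where "r = inverse (nsq m + 1)"
    have r: "r > 0" "r * nsq m < 1" using nsq_nonneg[of m] unfolding r_def by (auto simp: field_simps)
    define t where "t = - (complex_of_real r * c)"
    have "p + sc (- t) m \<in> M" using Madd Msc pM mM by blast
    then have "d2 \<le> nsq (x - (p + sc (- t) m))" by (rule d2le)
    also have "x - (p + sc (- t) m) = (x - p) + sc t m" by (simp add: sc_neg)
    also have "nsq \<dots> = nsq (x - p) + 2 * Re (cnj t * c) + (cmod t)^2 * nsq m"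
      unfolding c_def by (rule nsq_expand)
    also have "cnj t * c = - complex_of_real (r * (cmod c)^2)"
    proof -
      have cc: "cnj c * c = complex_of_real ((cmod c)^2)"
        by (simp only: complex_norm_square mult.commute)
      have "cnj t * c = - (complex_of_real r * (cnj c * c))" unfolding t_def by (simp add: mult.assoc)
      also have "\<dots> = - (complex_of_real r * complex_of_real ((cmod c)^2))" by (simp only: cc)
      finally show ?thesis by (simp only: of_real_mult)
    qed
    also have "(cmod t)^2 = r^2 * (cmod c)^2" unfolding t_def using r
      by (simp add: norm_mult power_mult_distrib)
    finally have "d2 \<le> nsq (x - p) - 2 * r * (cmod c)^2 + r^2 * (cmod c)^2 * nsq m" by simp
    then have "2 * r * (cmod c)^2 \<le> r * (cmod c)^2 * (r * nsq m)" using xp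
      by (simp add: power2_eq_square algebra_simps)
    then have "2 * (cmod c)^2 \<le> (cmod c)^2 * (r * nsq m)" using r(1)
      by (simp add: mult.assoc)
    moreover have "(cmod c)^2 * (r * nsq m) \<le> (cmod c)^2" using r(2)
      by (simp add: mult_left_le)
    ultimately have "(cmod c)^2 \<le> 0" by linarith
    then show ?thesis unfolding c_def by simp
  qed
  then show ?thesis using pM by blast
qed

end

locale sa = chs +
  fixes D :: "'a set" and A :: "'a \<Rightarrow> 'a"
  assumes SA: "selfadjoint_op sc ip D A"
begin

lemma SA': "(0 \<in> D \<and>
    (\<forall>u\<in>D. \<forall>v\<in>D. u + v \<in> D) \<and>
    (\<forall>c. \<forall>u\<in>D. sc c u \<in> D) \<and>
    (\<forall>x. \<forall>e>0. (\<exists>d\<in>D. cnorm ip (x - d) < e)) \<and>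
    (\<forall>u\<in>D. \<forall>v\<in>D. A (u + v) = A u + A v) \<and>
    (\<forall>c. \<forall>u\<in>D. A (sc c u) = sc c (A u))) \<and>
   adjoint_domain ip D A = D \<and> (\<forall>u\<in>D. \<forall>v\<in>D. ip (A u) v = ip u (A v))"
  using SA unfolding selfadjoint_op_def densely_defined_linear_op_def .

lemma D0: "0 \<in> D" using SA'[THEN conjunct1, THEN conjunct1] .
lemma Dadd: "u \<in> D \<Longrightarrow> v \<in> D \<Longrightarrow> u + v \<in> D"
  using SA'[THEN conjunct1, THEN conjunct2, THEN conjunct1] by blast
lemma Dsc: "u \<in> D \<Longrightarrow> sc c u \<in> D"
  using SA'[THEN conjunct1, THEN conjunct2, THEN conjunct2, THEN conjunct1] by blast
lemma dense: "e > 0 \<Longrightarrow> \<exists>d\<in>D. cnorm ip (x - d) < e"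
  using SA'[THEN conjunct1, THEN conjunct2, THEN conjunct2, THEN conjunct2, THEN conjunct1] by blast
lemma Aadd: "u \<in> D \<Longrightarrow> v \<in> D \<Longrightarrow> A (u + v) = A u + A v"
  using SA'[THEN conjunct1, THEN conjunct2, THEN conjunct2, THEN conjunct2, THEN conjunct2, THEN conjunct1] by blast
lemma Asc: "u \<in> D \<Longrightarrow> A (sc c u) = sc c (A u)"
  using SA'[THEN conjunct1, THEN conjunct2, THEN conjunct2, THEN conjunct2, THEN conjunct2, THEN conjunct2] by blast
lemma adj: "adjoint_domain ip D A = D" using SA'[THEN conjunct2, THEN conjunct1] .
lemma sym: "u \<in> D \<Longrightarrow> v \<in> D \<Longrightarrow> ip (A u) v = ip u (A v)"
  using SA'[THEN conjunct2, THEN conjunct2] by blast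

lemma adjI: assumes "\<forall>u\<in>D. ip (A u) v = ip u w" shows "v \<in> D"
proof -
  have "v \<in> adjoint_domain ip D A" unfolding adjoint_domain_def using assms by blast
  then show ?thesis using adj by simp
qed

lemma Dminus: "u \<in> D \<Longrightarrow> - u \<in> D"
  using Dsc[of u "-1"] by (simp add: sc_neg sc_one)
lemma Ddiff: assumes "u \<in> D" "v \<in> D" shows "u - v \<in> D"
  using Dadd[OF assms(1) Dminus[OF assms(2)]] by simp
lemma A0: "A 0 = 0"
  using Aadd[OF D0 D0] by simp
lemma Aminus: "u \<in> D \<Longrightarrow> A (- u) = - A u"
  using Asc[of u "-1"] by (simp add: sc_neg sc_one)
lemma Adiff: assumes "u \<in> D" "v \<in> D" shows "A (u - v) = A u - A v"
  using Aadd[OF assms(1) Dminus[OF assms(2)]] Aminus[OF assms(2)] by simp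

lemma dense_zero:
  assumes "\<forall>u\<in>D. ip u w = 0" shows "w = 0"
proof (rule ccontr)
  assume w: "w \<noteq> 0"
  then have "cnorm ip w \<noteq> 0" using cnorm_zero by simp
  then have cw: "cnorm ip w > 0" using cnorm_nonneg[of w] by simp
  then obtain d where d: "d \<in> D" "cnorm ip (w - d) < cnorm ip w / 2" using dense[of "cnorm ip w / 2"] by auto
  have "ip w w = ip (w - d) w + ip d w" by (simp add: ip_diff_l)
  then have "ip w w = ip (w - d) w" using assms d by simp
  then have "nsq w = Re (ip (w - d) w)" by (simp add: nsq_def)
  also have "\<dots> \<le> cmod (ip (w - d) w)" by (rule complex_Re_le_cmod)
  also have "\<dots> \<le> cnorm ip (w - d) * cnorm ip w" by (rule CS)
  also have "\<dots> \<le> cnorm ip w / 2 * cnorm ip w" using d(2) cw by simp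
  finally have "cnorm ip w * cnorm ip w \<le> cnorm ip w / 2 * cnorm ip w"
    using cnorm_sq[of w] by (simp add: power2_eq_square)
  from mult_right_le_imp_le[OF this cw] show False using cw by simp
qed

lemma Im_ip_A: "u \<in> D \<Longrightarrow> Im (ip (A u) u) = 0"
proof -
  assume u: "u \<in> D"
  have "ip (A u) u = ip u (A u)" using sym[OF u u] .
  also have "\<dots> = cnj (ip (A u) u)" by (rule ip_cnj)
  finally have "Im (ip (A u) u) = Im (cnj (ip (A u) u))" by (rule arg_cong)
  then show ?thesis by simp
qed

definition L where "L b u = A u + sc (\<i> * complex_of_real b) u"

lemma LD_add: "u \<in> D \<Longrightarrow> v \<in> D \<Longrightarrow> L b (u + v) = L b u + L b v"
  unfolding L_def by (simp add: Aadd sc_add algebra_simps)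
lemma LD_diff: "u \<in> D \<Longrightarrow> v \<in> D \<Longrightarrow> L b (u - v) = L b u - L b v"
  unfolding L_def by (simp add: Adiff sc_diff algebra_simps)
lemma LD_sc: "u \<in> D \<Longrightarrow> L b (sc c u) = sc c (L b u)"
  unfolding L_def by (simp add: Asc sc_add sc_sc mult.commute)
lemma L0: "L b 0 = 0" unfolding L_def by (simp add: A0)

lemma Im_ip_L: "u \<in> D \<Longrightarrow> Im (ip (L b u) u) = b * nsq u"
  unfolding L_def by (simp add: ip_add ip_sc ip_self Im_ip_A)

lemma est: assumes b: "b > 0" and u: "u \<in> D" shows "b * cnorm ip u \<le> cnorm ip (L b u)"
proof (cases "cnorm ip u = 0")
  case True then show ?thesis using cnorm_nonneg by simp
next
  case False
  then have cu: "cnorm ip u > 0" using cnorm_nonneg by (simp add: less_le)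
  have "b * (cnorm ip u * cnorm ip u) = Im (ip (L b u) u)" using Im_ip_L[OF u] by (simp add: cnorm_sq[symmetric] power2_eq_square)
  also have "\<dots> \<le> cmod (ip (L b u) u)" using abs_Im_le_cmod[of "ip (L b u) u"] by linarith
  also have "\<dots> \<le> cnorm ip (L b u) * cnorm ip u" by (rule CS)
  finally show ?thesis using cu by (simp add: mult.assoc[symmetric])
qed

lemma L_unique: "b > 0 \<Longrightarrow> u \<in> D \<Longrightarrow> v \<in> D \<Longrightarrow> L b u = L b v \<Longrightarrow> u = v"
  using est[of b "u - v"] Ddiff[of u v] LD_diff[of u v b] cnorm_zero[of "u - v"] cnorm_nonneg[of "u - v"]
  by (simp add: mult_le_0_iff)

end

context sa begin

lemma inv_Suc_small: "e > 0 \<Longrightarrow> \<exists>N. \<forall>n\<ge>N. inverse (real (Suc n)) < e"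
proof -
  assume e: "e > 0"
  obtain N :: nat where N: "inverse e < real N" using reals_Archimedean2 by blast
  show ?thesis
  proof (intro exI allI impI)
    fix n assume "n \<ge> N"
    then have "inverse e < real (Suc n)" using N by simp
    from less_imp_inverse_less[OF this] show "inverse (real (Suc n)) < e" using e by simp
  qed
qed

lemma range_closed:
  assumes b: "b > 0" and g: "\<forall>e>0. \<exists>u\<in>D. cnorm ip (g - L b u) < e"
  shows "\<exists>u\<in>D. L b u = g"
proof -
  have "\<forall>n. \<exists>u. u \<in> D \<and> cnorm ip (g - L b u) < inverse (real (Suc n))"
  proof
    fix n :: nat
    have "inverse (real (Suc n)) > 0" by simp
    then show "\<exists>u. u \<in> D \<and> cnorm ip (g - L b u) < inverse (real (Suc n))" using g by blast
  qed
  from choice[OF this] obtain uu where uu: "\<forall>n. uu n \<in> D \<and> cnorm ip (g - L b (uu n)) < inverse (real (Suc n))"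
    by blast
  have uuD: "\<And>n. uu n \<in> D" and uug: "\<And>n. cnorm ip (g - L b (uu n)) < inverse (real (Suc n))"
    using uu by auto
  have cauchy: "\<forall>e>0. \<exists>N. \<forall>m\<ge>N. \<forall>n\<ge>N. cnorm ip (uu m - uu n) < e"
  proof (intro allI impI)
    fix e :: real assume e: "e > 0"
    obtain N where N: "\<forall>n\<ge>N. inverse (real (Suc n)) < b * e / 2" using inv_Suc_small[of "b * e / 2"] e b by auto
    show "\<exists>N. \<forall>m\<ge>N. \<forall>n\<ge>N. cnorm ip (uu m - uu n) < e"
    proof (intro exI allI impI)
      fix m n assume m: "m \<ge> N" and n: "n \<ge> N"
      have "b * cnorm ip (uu m - uu n) \<le> cnorm ip (L b (uu m - uu n))"
        using est[OF b Ddiff[OF uuD uuD]] .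
      also have "L b (uu m - uu n) = L b (uu m) - L b (uu n)" using LD_diff[OF uuD uuD] .
      also have "cnorm ip (L b (uu m) - L b (uu n)) \<le> cnorm ip (L b (uu m) - g) + cnorm ip (g - L b (uu n))"
        by (rule triangle_diff)
      also have "\<dots> < b * e / 2 + b * e / 2"
      proof -
        have "cnorm ip (L b (uu m) - g) < inverse (real (Suc m))"
          using uug[of m] cnorm_commute[of "L b (uu m)" g] by simp
        moreover have "inverse (real (Suc m)) < b * e / 2" using N m by blast
        moreover have "inverse (real (Suc n)) < b * e / 2" using N n by blast
        ultimately show ?thesis using uug[of n] by linarith
      qed
      finally have "b * cnorm ip (uu m - uu n) < b * e" by simp
      then show "cnorm ip (uu m - uu n) < e" using b by simp
    qed
  qed
  obtain u where u: "(\<lambda>n. cnorm ip (uu n - u)) \<longlonglongrightarrow> 0" using complete[OF cauchy] by blast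
  have Lg: "(\<lambda>n. cnorm ip (L b (uu n) - g)) \<longlonglongrightarrow> 0"
  proof (rule Lim_null_comparison)
    show "\<forall>\<^sub>F n in sequentially. norm (cnorm ip (L b (uu n) - g)) \<le> inverse (real (Suc n))"
    proof (rule always_eventually, rule allI)
      fix n
      show "norm (cnorm ip (L b (uu n) - g)) \<le> inverse (real (Suc n))"
        using uug[of n] cnorm_commute[of "L b (uu n)" g] cnorm_nonneg[of "L b (uu n) - g"] by simp
    qed
    show "(\<lambda>n. inverse (real (Suc n))) \<longlonglongrightarrow> 0" by (rule LIMSEQ_inverse_real_of_nat)
  qed
  define ib where "ib = \<i> * complex_of_real b"
  have Luu: "A (uu n) = L b (uu n) - sc ib (uu n)" for n unfolding L_def ib_def by simp
  have key: "ip (A v) u = ip v (g - sc ib u)" if v: "v \<in> D" for v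
  proof -
    have l1: "(\<lambda>n. ip (A v) (uu n)) \<longlonglongrightarrow> ip (A v) u" by (rule lim_ip_r[OF u])
    have "(\<lambda>n. ip v (L b (uu n)) - cnj ib * ip v (uu n)) \<longlonglongrightarrow> ip v g - cnj ib * ip v u"
      by (intro tendsto_intros lim_ip_r[OF u] lim_ip_r[OF Lg])
    moreover have "ip (A v) (uu n) = ip v (L b (uu n)) - cnj ib * ip v (uu n)" for n
      using sym[OF v uuD[of n]] Luu[of n] by (simp add: ip_diff_r ip_sc_r)
    ultimately have l2: "(\<lambda>n. ip (A v) (uu n)) \<longlonglongrightarrow> ip v g - cnj ib * ip v u" by simp
    from LIMSEQ_unique[OF l1 l2] show ?thesis by (simp add: ip_diff_r ip_sc_r)
  qed
  have uD: "u \<in> D" using key by (intro adjI) blast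
  have "\<forall>v\<in>D. ip v (A u - (g - sc ib u)) = 0"
    using key sym[OF _ uD] by (simp add: ip_diff_r)
  then have "A u - (g - sc ib u) = 0" by (rule dense_zero)
  then have "L b u = g" unfolding L_def ib_def by (simp add: algebra_simps)
  then show ?thesis using uD by blast
qed

lemma range_perp:
  assumes b: "b > 0" and v: "\<forall>u\<in>D. ip (L b u) v = 0"
  shows "v = 0"
proof -
  define ib where "ib = \<i> * complex_of_real b"
  have "\<forall>u\<in>D. ip (A u) v = ip u (sc ib v)"
  proof
    fix u assume u: "u \<in> D"
    have "ip (A u) v + ib * ip u v = 0" using v u unfolding L_def ib_def by (simp add: ip_add ip_sc)
    then have "ip (A u) v = - (ib * ip u v)" by (simp only: eq_neg_iff_add_eq_0)
    moreover have "cnj ib = - ib" unfolding ib_def by simp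
    ultimately show "ip (A u) v = ip u (sc ib v)" by (simp add: ip_sc_r)
  qed
  then have vD: "v \<in> D" by (rule adjI)
  have "Im (ip (L b v) v) = b * nsq v" by (rule Im_ip_L[OF vD])
  then have "nsq v = 0" using v vD b by simp
  then show ?thesis using nsq_zero by simp
qed

lemma surj:
  assumes b: "b > 0" shows "\<exists>u\<in>D. L b u = g"
proof -
  define M where "M = {w. \<exists>u\<in>D. L b u = w}"
  have "\<exists>p\<in>M. \<forall>m\<in>M. ip (g - p) m = 0"
  proof (rule projection)
    show "0 \<in> M" unfolding M_def using D0 L0 by blast
    show "\<forall>u\<in>M. \<forall>v\<in>M. u + v \<in> M"
    proof (intro ballI)
      fix u v assume "u \<in> M" "v \<in> M"
      then obtain u1 v1 where "u1 \<in> D" "v1 \<in> D" "L b u1 = u" "L b v1 = v" unfolding M_def by blast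
      then have "u1 + v1 \<in> D" "L b (u1 + v1) = u + v" using Dadd LD_add by auto
      then show "u + v \<in> M" unfolding M_def by blast
    qed
    show "\<forall>c. \<forall>u\<in>M. sc c u \<in> M"
    proof (intro allI ballI)
      fix c u assume "u \<in> M"
      then obtain u1 where "u1 \<in> D" "L b u1 = u" unfolding M_def by blast
      then have "sc c u1 \<in> D" "L b (sc c u1) = sc c u" using Dsc LD_sc by auto
      then show "sc c u \<in> M" unfolding M_def by blast
    qed
    fix z assume z: "\<forall>e>0. \<exists>m\<in>M. cnorm ip (z - m) < e"
    have "\<forall>e>0. \<exists>u\<in>D. cnorm ip (z - L b u) < e"
    proof (intro allI impI)
      fix e :: real assume "e > 0"
      then obtain m where "m \<in> M" "cnorm ip (z - m) < e" using z by blast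
      then show "\<exists>u\<in>D. cnorm ip (z - L b u) < e" unfolding M_def by blast
    qed
    then show "z \<in> M" unfolding M_def using range_closed[OF b] by blast
  qed
  then obtain p where pM: "p \<in> M" and pp: "\<forall>m\<in>M. ip (g - p) m = 0" by blast
  have "\<forall>u\<in>D. ip (L b u) (g - p) = 0"
  proof
    fix u assume "u \<in> D"
    then have "ip (g - p) (L b u) = 0" using pp unfolding M_def by blast
    then show "ip (L b u) (g - p) = 0" using ip_cnj[of "g - p" "L b u"] by simp
  qed
  then have "g - p = 0" by (rule range_perp[OF b])
  then show ?thesis using pM unfolding M_def by simp
qed

end

context sa begin

lemma approx:
  assumes yperp: "\<forall>u\<in>D. A u = 0 \<longrightarrow> ip u y = 0"
  shows "\<forall>e>0. \<exists>z\<in>D. cnorm ip (y - A z) < e"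
proof -
  define M where "M = {x. \<forall>e>0. \<exists>z\<in>D. cnorm ip (x - A z) < e}"
  have AM: "A z \<in> M" if z: "z \<in> D" for z unfolding M_def
  proof (intro CollectI allI impI)
    fix e :: real assume "e > 0"
    then show "\<exists>z'\<in>D. cnorm ip (A z - A z') < e" using z by (intro bexI[of _ z]) simp_all
  qed
  have "\<exists>p\<in>M. \<forall>m\<in>M. ip (y - p) m = 0"
  proof (rule projection)
    show "0 \<in> M" using AM[OF D0] A0 by simp
    show "\<forall>u\<in>M. \<forall>v\<in>M. u + v \<in> M"
    proof (intro ballI)
      fix u v assume u: "u \<in> M" and v: "v \<in> M"
      show "u + v \<in> M" unfolding M_def
      proof (intro CollectI allI impI)
        fix e :: real assume e: "e > 0"
        have e2: "e/2 > 0" using e by simp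
        have uM: "\<forall>e>0. \<exists>z\<in>D. cnorm ip (u - A z) < e" using u unfolding M_def by simp
        have vM: "\<forall>e>0. \<exists>z\<in>D. cnorm ip (v - A z) < e" using v unfolding M_def by simp
        obtain z1 where z1: "z1 \<in> D" "cnorm ip (u - A z1) < e/2" using uM e2 by blast
        obtain z2 where z2: "z2 \<in> D" "cnorm ip (v - A z2) < e/2" using vM e2 by blast
        have eq: "u + v - A (z1 + z2) = (u - A z1) + (v - A z2)" using Aadd[OF z1(1) z2(1)] by (simp add: algebra_simps)
        have "cnorm ip (u + v - A (z1 + z2)) \<le> cnorm ip (u - A z1) + cnorm ip (v - A z2)"
          unfolding eq by (rule triangle)
        then show "\<exists>z\<in>D. cnorm ip (u + v - A z) < e" using z1 z2 Dadd by (intro bexI[of _ "z1 + z2"]) auto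
      qed
    qed
    show "\<forall>c. \<forall>u\<in>M. sc c u \<in> M"
    proof (intro allI ballI)
      fix c u assume u: "u \<in> M"
      show "sc c u \<in> M"
      proof (cases "c = 0")
        case True then show ?thesis using \<open>0 \<in> M\<close> by simp
      next
        case False
        then have cpos: "cmod c > 0" by simp
        show ?thesis unfolding M_def
        proof (intro CollectI allI impI)
          fix e :: real assume e: "e > 0"
          then have "e / cmod c > 0" using cpos by simp
          then obtain z where z: "z \<in> D" "cnorm ip (u - A z) < e / cmod c" using u unfolding M_def by blast
          have "sc c u - A (sc c z) = sc c (u - A z)" using Asc[OF z(1)] by (simp add: sc_diff)
          then have "cnorm ip (sc c u - A (sc c z)) = cmod c * cnorm ip (u - A z)" by (simp add: cnorm_sc)
          also have "\<dots> < cmod c * (e / cmod c)" using mult_strict_left_mono[OF z(2) cpos] .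
          finally show "\<exists>z\<in>D. cnorm ip (sc c u - A z) < e" using cpos Dsc[OF z(1)] by auto
        qed
      qed
    qed
    fix z assume z: "\<forall>e>0. \<exists>m\<in>M. cnorm ip (z - m) < e"
    show "z \<in> M" unfolding M_def
    proof (intro CollectI allI impI)
      fix e :: real assume e: "e > 0"
      have e2: "e/2 > 0" using e by simp
      obtain m where m: "m \<in> M" "cnorm ip (z - m) < e/2" using z e2 by blast
      have mM: "\<forall>e>0. \<exists>z\<in>D. cnorm ip (m - A z) < e" using m(1) unfolding M_def by simp
      obtain z1 where z1: "z1 \<in> D" "cnorm ip (m - A z1) < e/2" using mM e2 by blast
      have "cnorm ip (z - A z1) < e" using triangle_diff[of z "A z1" m] m(2) z1(2) by linarith
      then show "\<exists>z'\<in>D. cnorm ip (z - A z') < e" using z1(1) by blast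
    qed
  qed
  then obtain p where pM: "p \<in> M" and pp: "\<forall>m\<in>M. ip (y - p) m = 0" by blast
  have "\<forall>u\<in>D. ip (A u) (y - p) = ip u 0"
  proof
    fix u assume "u \<in> D"
    then have "ip (y - p) (A u) = 0" using pp AM by blast
    then show "ip (A u) (y - p) = ip u 0" using ip_cnj[of "y - p" "A u"] by simp
  qed
  then have ypD: "y - p \<in> D" by (rule adjI)
  have "\<forall>u\<in>D. ip u (A (y - p)) = 0"
  proof
    fix u assume u: "u \<in> D"
    have "ip (y - p) (A u) = 0" using pp AM u by blast
    then have "ip (A u) (y - p) = 0" using ip_cnj[of "y - p" "A u"] by simp
    then show "ip u (A (y - p)) = 0" using sym[OF u ypD] by simp
  qed
  then have "A (y - p) = 0" by (rule dense_zero)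
  then have "ip (y - p) y = 0" using yperp ypD by blast
  moreover have "ip (y - p) p = 0" using pp pM by blast
  ultimately have "ip (y - p) (y - p) = 0" by (simp add: ip_diff_r)
  then have "y - p = 0" by (rule ip_zero)
  then have "y = p" by simp
  then show ?thesis using pM unfolding M_def by blast
qed

lemma w_bound:
  assumes b: "b > 0" and w: "w \<in> D" and Lw: "L b w = sc (\<i> * complex_of_real b) y" and z: "z \<in> D"
  shows "nsq w \<le> cnorm ip (y - A z) * cnorm ip y + 2 * b * cnorm ip z * cnorm ip y"
proof -
  define ib where "ib = \<i> * complex_of_real b"
  have "ip (L b w) w = ib * ip y w" using Lw unfolding ib_def by (simp add: ip_sc)
  moreover have "Im (ib * ip y w) = b * Re (ip y w)" unfolding ib_def by simp
  ultimately have h2: "Im (ip (L b w) w) = b * Re (ip y w)" by simp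
  have h1: "Im (ip (L b w) w) = b * nsq w" by (rule Im_ip_L[OF w])
  have eqn: "b * nsq w = b * Re (ip y w)" using h1 h2 by linarith
  have bne: "b \<noteq> 0" using b by simp
  have nw: "nsq w = Re (ip y w)" using mult_left_cancel[OF bne] eqn by blast
  also have "\<dots> \<le> cmod (ip y w)" by (rule complex_Re_le_cmod)
  also have "\<dots> \<le> cnorm ip y * cnorm ip w" by (rule CS)
  finally have nw2: "cnorm ip w * cnorm ip w \<le> cnorm ip y * cnorm ip w" using cnorm_sq[of w] by (simp add: power2_eq_square)
  have wy: "cnorm ip w \<le> cnorm ip y"
  proof (cases "cnorm ip w = 0")
    case True then show ?thesis using cnorm_nonneg[of y] by simp
  next
    case False then have "cnorm ip w > 0" using cnorm_nonneg[of w] by simp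
    then show ?thesis using nw2 mult_right_le_imp_le by blast
  qed
  have Aw: "A w = sc ib y - sc ib w" using Lw unfolding L_def ib_def by (simp add: eq_diff_eq)
  have "ip y w = ip (y - A z) w + ip (A z) w" by (simp add: ip_diff_l)
  also have "ip (A z) w = ip z (sc ib y - sc ib w)" using sym[OF z w] Aw by simp
  finally have t1: "cmod (ip y w) \<le> cmod (ip (y - A z) w) + cmod (ip z (sc ib y - sc ib w))"
    using norm_triangle_ineq[of "ip (y - A z) w" "ip z (sc ib y - sc ib w)"] by simp
  have t2: "cmod (ip (y - A z) w) \<le> cnorm ip (y - A z) * cnorm ip y"
    using CS[of "y - A z" w] mult_left_mono[OF wy cnorm_nonneg[of "y - A z"]] by linarith
  have t3: "cmod (ip z (sc ib y - sc ib w)) \<le> cnorm ip z * (b * cnorm ip y + b * cnorm ip y)"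
  proof -
    have cib: "cmod ib = b" unfolding ib_def using b by (simp add: norm_mult)
    have "cnorm ip (sc ib y - sc ib w) = cnorm ip (sc ib y + (- sc ib w))" by simp
    also have "\<dots> \<le> cnorm ip (sc ib y) + cnorm ip (- sc ib w)" by (rule triangle)
    also have "\<dots> = b * cnorm ip y + b * cnorm ip w" by (simp add: cnorm_minus cnorm_sc cib)
    also have "\<dots> \<le> b * cnorm ip y + b * cnorm ip y" using wy b by simp
    finally have "cnorm ip (sc ib y - sc ib w) \<le> b * cnorm ip y + b * cnorm ip y" .
    then show ?thesis using CS[of z "sc ib y - sc ib w"] mult_left_mono[OF _ cnorm_nonneg[of z]] by (meson order_trans)
  qed
  have t4: "cnorm ip z * (b * cnorm ip y + b * cnorm ip y) = 2 * b * cnorm ip z * cnorm ip y"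
    by (simp add: algebra_simps)
  have "cmod (ip y w) \<le> cnorm ip (y - A z) * cnorm ip y + 2 * b * cnorm ip z * cnorm ip y"
    using t1 t2 t3 t4 by linarith
  then show ?thesis using nw complex_Re_le_cmod[of "ip y w"] by linarith
qed

end

theorem theorem1:
  fixes sc :: "complex \<Rightarrow> 'a::ab_group_add \<Rightarrow> 'a"
    and ip :: "'a \<Rightarrow> 'a \<Rightarrow> complex"
    and D :: "'a set" and A :: "'a \<Rightarrow> 'a"
    and f y :: 'a and fd :: "real \<Rightarrow> 'a" and a :: "real \<Rightarrow> real"
  assumes H: "complex_hilbert_space sc ip"
    and SA: "selfadjoint_op sc ip D A"
    and solvable: "\<exists>u\<in>D. A u = f"
    and y_sol: "y \<in> D" "A y = f"
    and y_perp: "\<forall>u\<in>D. A u = 0 \<longrightarrow> ip u y = 0"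
    and fd: "\<forall>\<delta>>0. cnorm ip (f - fd \<delta>) \<le> \<delta>"
    and a_pos: "\<forall>\<delta>>0. a \<delta> > 0"
    and a_lim: "(a \<longlongrightarrow> 0) (at_right 0)"
    and da_lim: "((\<lambda>\<delta>. \<delta> / a \<delta>) \<longlongrightarrow> 0) (at_right 0)"
  shows "(\<forall>\<delta>>0. \<exists>!u. u \<in> D \<and> A u + sc (\<i> * complex_of_real (a \<delta>)) u = fd \<delta>) \<and>
         ((\<lambda>\<delta>. cnorm ip ((THE u. u \<in> D \<and> A u + sc (\<i> * complex_of_real (a \<delta>)) u = fd \<delta>) - y))
            \<longlongrightarrow> 0) (at_right 0)"
proof -
  interpret sa sc ip D A by (simp add: sa_def chs_def sa_axioms_def H SA)
  have ex1: "\<exists>!u. u \<in> D \<and> A u + sc (\<i> * complex_of_real b) u = g" if b: "b > 0" for b g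
  proof -
    obtain u where u: "u \<in> D" "L b u = g" using surj[OF b] by blast
    show ?thesis
    proof (rule ex1I[of _ u])
      show "u \<in> D \<and> A u + sc (\<i> * complex_of_real b) u = g" using u unfolding L_def by simp
      fix v assume "v \<in> D \<and> A v + sc (\<i> * complex_of_real b) v = g"
      then show "v = u" using L_unique[OF b, of v u] u unfolding L_def by simp
    qed
  qed
  define R where "R b g = (THE u. u \<in> D \<and> A u + sc (\<i> * complex_of_real b) u = g)" for b g
  have R: "R b g \<in> D \<and> L b (R b g) = g" if "b > 0" for b g
    using theI'[OF ex1[OF that, of g]] unfolding R_def L_def by simp
  define w where "w \<delta> = R (a \<delta>) (sc (\<i> * complex_of_real (a \<delta>)) y)" for \<delta>
  have bound: "cnorm ip (R (a \<delta>) (fd \<delta>) - y) \<le> \<delta> / a \<delta> + cnorm ip (w \<delta>)" if d: "\<delta> > 0" for \<delta>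
  proof -
    define b where "b = a \<delta>"
    have b: "b > 0" using a_pos d b_def by simp
    define u where "u = R b (fd \<delta>)"
    define ww where "ww = w \<delta>"
    have uD: "u \<in> D" and Lu: "L b u = fd \<delta>" using R[OF b] u_def by auto
    have wD: "ww \<in> D" and Lw: "L b ww = sc (\<i> * complex_of_real b) y" using R[OF b] ww_def w_def b_def by auto
    have Ly: "L b y = f + sc (\<i> * complex_of_real b) y" unfolding L_def using y_sol by simp
    define e1 where "e1 = u - y + ww"
    have e1D: "e1 \<in> D" unfolding e1_def using uD wD y_sol(1) Dadd Ddiff by blast
    have "L b e1 = L b u - L b y + L b ww" unfolding e1_def
      using LD_add[OF Ddiff[OF uD y_sol(1)] wD] LD_diff[OF uD y_sol(1)] by simp
    also have "\<dots> = fd \<delta> - f" using Lu Ly Lw by simp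
    finally have Le1: "L b e1 = fd \<delta> - f" .
    have "b * cnorm ip e1 \<le> cnorm ip (fd \<delta> - f)" using est[OF b e1D] Le1 by simp
    also have "\<dots> \<le> \<delta>" using fd d cnorm_commute[of "fd \<delta>" f] by simp
    finally have "b * cnorm ip e1 \<le> \<delta>" .
    then have ce1: "cnorm ip e1 \<le> \<delta> / b" using b by (simp add: field_simps)
    have "u - y = e1 + (- ww)" unfolding e1_def by simp
    then have "cnorm ip (u - y) \<le> cnorm ip e1 + cnorm ip ww" using triangle[of e1 "- ww"] cnorm_minus by simp
    then show ?thesis using ce1 unfolding u_def ww_def b_def by simp
  qed
  have wlim: "((\<lambda>\<delta>. cnorm ip (w \<delta>)) \<longlongrightarrow> 0) (at_right 0)"
  proof (rule order_tendstoI)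
    fix c :: real assume "c < 0"
    then show "\<forall>\<^sub>F \<delta> in at_right 0. c < cnorm ip (w \<delta>)"
      using cnorm_nonneg by (intro always_eventually) (auto intro: less_le_trans)
  next
    fix e :: real assume e: "e > 0"
    define cy where "cy = cnorm ip y"
    have cy: "cy \<ge> 0" unfolding cy_def by (rule cnorm_nonneg)
    define eta where "eta = e^2 / (2 * (cy + 1))"
    have eta: "eta > 0" unfolding eta_def using e cy by simp
    obtain z where zD: "z \<in> D" and z: "cnorm ip (y - A z) < eta" using approx[OF y_perp] eta by blast
    define P where "P = cnorm ip z * cy"
    have P: "P \<ge> 0" unfolding P_def using cy cnorm_nonneg by simp
    define th where "th = e^2 / (4 * (P + 1))"
    have th: "th > 0" unfolding th_def using e P by simp
    have ev1: "\<forall>\<^sub>F \<delta> in at_right 0. a \<delta> < th" using order_tendstoD(2)[OF a_lim th] .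
    have ev2: "\<forall>\<^sub>F \<delta> in at_right (0::real). 0 < \<delta>" by (rule eventually_at_right_less)
    have t1: "cnorm ip (y - A z) * cy < e^2 / 2"
    proof -
      have "cnorm ip (y - A z) * cy \<le> eta * cy" using z cy by (simp add: mult_right_mono)
      also have "\<dots> < eta * (cy + 1)" using eta by simp
      also have "eta * (cy + 1) = e^2 / 2" unfolding eta_def using cy by (simp add: field_simps)
      finally show ?thesis .
    qed
    have t2: "th * P < e^2 / 4"
    proof -
      have "th * P < th * (P + 1)" using th by simp
      also have "th * (P + 1) = e^2 / 4" unfolding th_def using P by (simp add: field_simps)
      finally show ?thesis .
    qed
    show "\<forall>\<^sub>F \<delta> in at_right 0. cnorm ip (w \<delta>) < e"
      using ev1 ev2
    proof eventually_elim
      case (elim \<delta>)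
      define b where "b = a \<delta>"
      have b: "b > 0" using a_pos elim b_def by simp
      have bth: "b < th" using elim b_def by simp
      have wD: "w \<delta> \<in> D" and Lw: "L b (w \<delta>) = sc (\<i> * complex_of_real b) y"
        using R[OF b] w_def b_def by auto
      have nb: "nsq (w \<delta>) \<le> cnorm ip (y - A z) * cy + 2 * b * P"
        using w_bound[OF b wD Lw zD] unfolding cy_def P_def by (simp add: mult.assoc)
      have "b * P \<le> th * P" using bth P by (simp add: mult_right_mono)
      then have "nsq (w \<delta>) < e^2" using nb t1 t2 by linarith
      then show ?case using cnorm_lt_of_nsq[OF e] by blast
    qed
  qed
  have main: "((\<lambda>\<delta>. cnorm ip (R (a \<delta>) (fd \<delta>) - y)) \<longlongrightarrow> 0) (at_right 0)"
  proof (rule Lim_null_comparison)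
    show "\<forall>\<^sub>F \<delta> in at_right 0. norm (cnorm ip (R (a \<delta>) (fd \<delta>) - y)) \<le> \<delta> / a \<delta> + cnorm ip (w \<delta>)"
      using eventually_at_right_less[of "0::real"]
    proof eventually_elim
      case (elim \<delta>)
      then show ?case using bound[OF elim] cnorm_nonneg by simp
    qed
    show "((\<lambda>\<delta>. \<delta> / a \<delta> + cnorm ip (w \<delta>)) \<longlongrightarrow> 0) (at_right 0)"
      using tendsto_add[OF da_lim wlim] by simp
  qed
  have part1: "\<forall>\<delta>>0. \<exists>!u. u \<in> D \<and> A u + sc (\<i> * complex_of_real (a \<delta>)) u = fd \<delta>"
    using ex1 a_pos by blast
  show ?thesis using part1 main unfolding R_def by simp
qed

end
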